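(* Under Assumptions 1–4 below, the iterates of Algorithm 2Direction satisfy, for every $t\ge0$, $$\begin{aligned}\mathbb E_t[f(z^{t+1})-f(x^* )]&\le(1-p\theta_{t+1})(f(z^t)-f(x^* ))+\frac{2p\omega}{n\bar L}\Big(\frac1n\sum_{i=1}^n\|h_i^t-\nabla f_i(z^t)\|^2\Big)\\&\quad+p\theta_{t+1}\Big(\frac{\bar L+\Gamma_t\mu}{2\gamma_{t+1}}\|u^t-x^*\|^2-\frac{\bar L+\Gamma_{t+1}\mu}{2\gamma_{t+1}}\mathbb E_t\|u^{t+1}-x^*\|^2\Big)\\&\quad+p\Big(\frac{4\omega L_{\max}}{n\bar L}+\theta_{t+1}-1\Big)D_f(z^t,y^{t+1})+\frac{pL}{2}\mathbb E_t\|x^{t+1}-y^{t+1}\|^2-\frac{p\theta_{t+1}^2\bar L}{2}\mathbb E_t\|u^{t+1}-u^t\|^2,\end{aligned}$$ where $D_f(x,y)=f(x)-f(y)-\langle\nabla f(y),x-y\rangle$.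
   Context: Setting: $f=\frac1n\sum_{i=1}^nf_i$, $f_i:\mathbb R^d\to\mathbb R$. Assumption 1: each $f_i$ is $L_i$-smooth, $L_{\max}=\max_iL_i$, and $\widehat L>0$ satisfies $\frac1n\sum_i\|\nabla f_i(x)-\nabla f_i(y)\|^2\le\widehat L^2\|x-y\|^2$ for all $x,y$. Assumption 2: $f$ is $L$-smooth. Assumption 3: each $f_i$ is convex and $f$ is $\mu$-strongly convex ($\mu\ge0$) with minimizer $x^*$. Assumption 4: the randomness of all compressors is drawn independently (of each other, of the coins $c^t$, and of the past). Compressor classes: $\mathbb U(\omega)$ ($\omega\ge0$) = stochastic maps $\mathcal C$ with $\mathbb E\mathcal C(x)=x$, $\mathbb E\|\mathcal C(x)-x\|^2\le\omega\|x\|^2$; $\mathbb B(\alpha)$ ($\alpha\in(0,1]$) = possibly stochastic maps with $\mathbb E\|\mathcal C(x)-x\|^2\le(1-\alpha)\|x\|^2$. Algorithm 2Direction: compressors $\mathcal C_i^{D,y},\mathcal C_i^{D,z}\in\mathbb U(\omega)$ (workers), $\mathcal C^P\in\mathbb B(\alpha)$ (server); parameters $\bar L>0$, $\mu\ge0$ (the strong convexity constant), $p\in(0,1]$, $\Gamma_0\ge1$, $\tau\in(0,1]$, $x^0,h_1^0,\dots,h_n^0,k^0,v^0\in\mathbb R^d$. Set $\beta=1/(\omega+1)$, $w^0=z^0=u^0=x^0$, $h^0=\frac1n\sum_ih_i^0$, $\theta_{\min}=\frac14\min\{1,\alpha/p,\tau/p,\beta/p\}$. For $t=0,1,\dots$: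 let $\bar\theta_{t+1}$ be the largest root of $p\bar L\Gamma_t\theta^2+p(\bar L+\Gamma_t\mu)\theta-(\bar L+\Gamma_t\mu)=0$, $\theta_{t+1}=\min\{\bar\theta_{t+1},\theta_{\min}\}$, $\gamma_{t+1}=p\theta_{t+1}\Gamma_t/(1-p\theta_{t+1})$, $\Gamma_{t+1}=\Gamma_t+\gamma_{t+1}$; $y^{t+1}=\theta_{t+1}w^t+(1-\theta_{t+1})z^t$; $m_i^{t,y}=\mathcal C_i^{D,y}(\nabla f_i(y^{t+1})-h_i^t)$; $g^{t+1}=h^t+\frac1n\sum_im_i^{t,y}$; $u^{t+1}=\arg\min_x\{\langle g^{t+1},x\rangle+\frac{\bar L+\Gamma_t\mu}{2\gamma_{t+1}}\|x-u^t\|^2+\frac\mu2\|x-y^{t+1}\|^2\}$; $q^{t+1}=\arg\min_x\{\langle k^t,x\rangle+\frac{\bar L+\Gamma_t\mu}{2\gamma_{t+1}}\|x-w^t\|^2+\frac\mu2\|x-y^{t+1}\|^2\}$; $w^{t+1}=q^{t+1}+\mathcal C^P(u^{t+1}-q^{t+1})$; $x^{t+1}=\theta_{t+1}u^{t+1}+(1-\theta_{t+1})z^t$; draw $c^t\sim\mathrm{Bernoulli}(p)$, and set $(k^{t+1},z^{t+1})=(v^t,x^{t+1})$ if $c^t=1$, $(k^{t+1},z^{t+1})=(k^t,z^t)$ if $c^t=0$; $m_i^{t,z}=\mathcal C_i^{D,z}(\nabla f_i(z^{t+1})-h_i^t)$; $h_i^{t+1}=h_i^t+\beta m_i^{t,z}$;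 $v^{t+1}=(1-\tau)v^t+\tau(h^t+\frac1n\sum_im_i^{t,z})$; $h^{t+1}=h^t+\frac\beta n\sum_im_i^{t,z}$. $\mathbb E_t$ denotes conditional expectation given the randomness of the first $t$ iterations. *)

theory Defs
  imports "HOL-Analysis.Analysis" "HOL-Probability.Probability"
begin

definition smooth_with :: "real \<Rightarrow> ('a::euclidean_space \<Rightarrow> real) \<Rightarrow> ('a \<Rightarrow> 'a) \<Rightarrow> bool" where
  "smooth_with L f Df \<longleftrightarrow>
     (\<forall>x. GDERIV f x :> Df x) \<and> (\<forall>x y. norm (Df x - Df y) \<le> L * norm (x - y))"

definition strongly_convex :: "real \<Rightarrow> ('a::euclidean_space \<Rightarrow> real) \<Rightarrow> bool" where
  "strongly_convex mu f \<longleftrightarrow> convex_on UNIV (\<lambda>x. f x - mu / 2 * norm x ^ 2)"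

text \<open>Class U(omega) of unbiased compressors: a stochastic map, realised as
  C :: sample \<Rightarrow> vector \<Rightarrow> vector on the probability space M.\<close>
definition unbiased_compressor :: "'w measure \<Rightarrow> real \<Rightarrow> ('w \<Rightarrow> 'a::euclidean_space \<Rightarrow> 'a) \<Rightarrow> bool" where
  "unbiased_compressor M omega C \<longleftrightarrow> omega \<ge> 0 \<and>
     (\<forall>x. (\<lambda>s. C s x) \<in> borel_measurable M \<and> integrable M (\<lambda>s. C s x) \<and>
          (\<integral>s. C s x \<partial>M) = x \<and>
          integrable M (\<lambda>s. (norm (C s x - x))\<^sup>2) \<and>
          (\<integral>s. (norm (C s x - x))\<^sup>2 \<partial>M) \<le> omega * (norm x)\<^sup>2)"

definition bregman :: "('a::euclidean_space \<Rightarrow> real) \<Rightarrow> ('a \<Rightarrow> 'a) \<Rightarrow> 'a \<Rightarrow> 'a \<Rightarrow> real" where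
  "bregman f Df x y = f x - f y - inner (Df y) (x - y)"

definition largest_root :: "real \<Rightarrow> real \<Rightarrow> real \<Rightarrow> real" where
  "largest_root a b c = (- b + sqrt (b\<^sup>2 + 4 * a * c)) / (2 * a)"

end

theory Submission
  imports Defs
begin



lemma convex_grad_ineq:
  fixes F :: "'a::euclidean_space \<Rightarrow> real"
  assumes cv: "convex_on UNIV F" and d: "(F has_derivative (\<lambda>h. inner h D)) (at x)"
  shows "F x + inner D (y - x) \<le> F y"
proof -
  define phi where "phi = (\<lambda>t::real. F (x + t *\<^sub>R (y - x)))"
  have cphi: "convex_on UNIV phi"
    unfolding phi_def
  proof (rule convex_onI)
    fix a t s :: real assume a: "0 < a" "a < 1"
    have "x + ((1 - a) *\<^sub>R t + a *\<^sub>R s) *\<^sub>R (y - x) = (1 - a) *\<^sub>R (x + t *\<^sub>R (y - x)) + a *\<^sub>R (x + s *\<^sub>R (y - x))"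
      by (simp add: algebra_simps)
    then show "F (x + ((1 - a) *\<^sub>R t + a *\<^sub>R s) *\<^sub>R (y - x)) \<le> (1 - a) * F (x + t *\<^sub>R (y - x)) + a * F (x + s *\<^sub>R (y - x))"
      using convex_onD[OF cv, of a] a by simp
  qed simp
  have l: "((\<lambda>t::real. x + t *\<^sub>R (y - x)) has_derivative (\<lambda>t. t *\<^sub>R (y - x))) (at 0)"
    by (auto intro!: derivative_eq_intros)
  have d0: "(F has_derivative (\<lambda>h. inner h D)) (at (x + 0 *\<^sub>R (y - x)))" using d by simp
  have "(phi has_derivative (\<lambda>t. inner (t *\<^sub>R (y - x)) D)) (at 0)"
    unfolding phi_def using has_derivative_compose[OF l d0] by (simp add: o_def)
  then have "(phi has_field_derivative (inner (y - x) D)) (at 0 within UNIV)"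
    unfolding has_field_derivative_def by (rule has_derivative_eq_rhs) (auto simp: fun_eq_iff)
  from convex_on_imp_above_tangent[OF cphi _ _ _ this, of 1]
  have "inner (y - x) D * (1 - 0) \<le> phi 1 - phi 0" by simp
  then show ?thesis unfolding phi_def by (simp add: inner_commute)
qed

lemma descent:
  fixes f :: "'a::euclidean_space \<Rightarrow> real"
  assumes sm: "smooth_with L f Df"
  shows "f y \<le> f x + inner (Df x) (y - x) + L / 2 * (norm (y - x))\<^sup>2"
proof -
  define v where "v = y - x"
  define h where "h = (\<lambda>t::real. f (x + t *\<^sub>R v) - t * inner (Df x) v - L / 2 * t^2 * (norm v)\<^sup>2)"
  have "h 1 \<le> h 0"
  proof (rule DERIV_nonpos_imp_nonincreasing[of 0 1])
    fix t :: real assume t: "0 \<le> t" "t \<le> 1"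
    have l: "((\<lambda>t::real. x + t *\<^sub>R v) has_derivative (\<lambda>s. s *\<^sub>R v)) (at t)"
      by (auto intro!: derivative_eq_intros)
    have dd: "(f has_derivative (\<lambda>h. inner h (Df (x + t *\<^sub>R v)))) (at (x + t *\<^sub>R v))"
      using sm unfolding smooth_with_def gderiv_def by blast
    have "((\<lambda>t. f (x + t *\<^sub>R v)) has_derivative (\<lambda>s. inner (s *\<^sub>R v) (Df (x + t *\<^sub>R v)))) (at t)"
      using has_derivative_compose[OF l dd] by (simp add: o_def)
    then have d1: "((\<lambda>t. f (x + t *\<^sub>R v)) has_field_derivative inner v (Df (x + t *\<^sub>R v))) (at t)"
      unfolding has_field_derivative_def by (rule has_derivative_eq_rhs) (auto simp: fun_eq_iff)
    have "(h has_field_derivative (inner v (Df (x + t *\<^sub>R v)) - inner (Df x) v - L / 2 * (2 * t) * (norm v)\<^sup>2)) (at t)"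
      unfolding h_def
      by (rule derivative_eq_intros d1 refl | simp)+
    moreover have "inner v (Df (x + t *\<^sub>R v)) - inner (Df x) v - L / 2 * (2 * t) * (norm v)\<^sup>2 \<le> 0"
    proof -
      have "inner v (Df (x + t *\<^sub>R v)) - inner (Df x) v = inner v (Df (x + t *\<^sub>R v) - Df x)"
        by (simp add: inner_diff_right inner_commute)
      also have "\<dots> \<le> norm v * norm (Df (x + t *\<^sub>R v) - Df x)"
        by (rule norm_cauchy_schwarz)
      also have "\<dots> \<le> norm v * (L * norm (t *\<^sub>R v))"
        using sm unfolding smooth_with_def
        by (intro mult_left_mono) (use spec[OF spec[OF conjunct2[OF sm[unfolded smooth_with_def]], of "x + t *\<^sub>R v"], of x] in simp_all)
      also have "\<dots> = L * t * (norm v)\<^sup>2" using t by (simp add: power2_eq_square)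
      finally show ?thesis by simp
    qed
    ultimately show "\<exists>y. (h has_real_derivative y) (at t) \<and> y \<le> 0" by blast
  qed simp
  then show ?thesis unfolding h_def v_def by simp
qed



lemma strong_ineq:
  fixes f :: "'a::euclidean_space \<Rightarrow> real"
  assumes sc: "strongly_convex mu f" and sm: "smooth_with L f Df"
  shows "f y + inner (Df y) (x - y) + mu / 2 * (norm (x - y))\<^sup>2 \<le> f x"
proof -
  have cv: "convex_on UNIV (\<lambda>x. f x - mu / 2 * norm x ^ 2)" using sc unfolding strongly_convex_def .
  have df: "(f has_derivative (\<lambda>h. inner h (Df y))) (at y)"
    using sm unfolding smooth_with_def gderiv_def by blast
  have dn: "((\<lambda>x. inner x x) has_derivative (\<lambda>h. inner h y + inner y h)) (at y)"
    by (rule has_derivative_eq_rhs, rule derivative_intros, rule derivative_intros, rule derivative_intros) auto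
  have "((\<lambda>x. f x - mu / 2 * inner x x) has_derivative (\<lambda>h. inner h (Df y - mu *\<^sub>R y))) (at y)"
    by (rule has_derivative_eq_rhs, rule has_derivative_diff[OF df has_derivative_mult_right[OF dn]])
       (auto simp: fun_eq_iff inner_diff_right inner_commute algebra_simps)
  then have d: "((\<lambda>x. f x - mu / 2 * norm x ^ 2) has_derivative (\<lambda>h. inner h (Df y - mu *\<^sub>R y))) (at y)"
    by (simp add: power2_norm_eq_inner)
  from convex_grad_ineq[OF cv d, of x]
  have "f y - mu / 2 * norm y ^ 2 + inner (Df y - mu *\<^sub>R y) (x - y) \<le> f x - mu / 2 * norm x ^ 2" .
  moreover have "norm (x - y) ^ 2 = norm x ^ 2 - 2 * inner y x + norm y ^ 2"
    by (simp add: power2_norm_eq_inner inner_diff_left inner_diff_right inner_commute)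
  ultimately show ?thesis
    by (simp add: inner_diff_left inner_diff_right algebra_simps power2_norm_eq_inner)
qed

lemma convex_ineq:
  fixes f :: "'a::euclidean_space \<Rightarrow> real"
  assumes cv: "convex_on UNIV f" and sm: "smooth_with L f Df"
  shows "f y + inner (Df y) (x - y) \<le> f x"
  using convex_grad_ineq[OF cv, of "Df y" y x] sm unfolding smooth_with_def gderiv_def by blast

lemma bregman_nonneg:
  fixes f :: "'a::euclidean_space \<Rightarrow> real"
  assumes cv: "convex_on UNIV f" and sm: "smooth_with L f Df"
  shows "0 \<le> bregman f Df x y"
  using convex_ineq[OF cv sm, of y x] unfolding bregman_def by simp

lemma cocoercive:
  fixes f :: "'a::euclidean_space \<Rightarrow> real"
  assumes cv: "convex_on UNIV f" and sm: "smooth_with L f Df"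
  shows "(norm (Df z - Df y))\<^sup>2 \<le> 2 * L * bregman f Df z y"
proof (cases "L > 0")
  case True
  define G where "G = Df z - Df y"
  define w where "w = z - (1 / L) *\<^sub>R G"
  have a1: "f y + inner (Df y) (w - y) \<le> f w" by (rule convex_ineq[OF cv sm])
  have a2: "f w \<le> f z + inner (Df z) (w - z) + L / 2 * (norm (w - z))\<^sup>2" by (rule descent[OF sm])
  have e1: "w - z = - (1 / L) *\<^sub>R G" unfolding w_def by simp
  have e2: "w - y = (z - y) - (1 / L) *\<^sub>R G" unfolding w_def by simp
  have "inner (Df z) (w - z) - inner (Df y) (w - y) = - inner (Df y) (z - y) - (1 / L) * (norm G)\<^sup>2"
    unfolding e1 e2 G_def by (simp add: inner_diff_right inner_diff_left power2_norm_eq_inner algebra_simps)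
  moreover have "L / 2 * (norm (w - z))\<^sup>2 = L / 2 * ((1 / L)\<^sup>2 * (norm G)\<^sup>2)" unfolding e1 using True by (simp add: power_divide)
  ultimately have "(1 / L) * (norm G)\<^sup>2 - L / 2 * ((1 / L)\<^sup>2 * (norm G)\<^sup>2) \<le> bregman f Df z y"
    using a1 a2 unfolding bregman_def by linarith
  moreover have "(1 / L) * (norm G)\<^sup>2 - L / 2 * ((1 / L)\<^sup>2 * (norm G)\<^sup>2) = (norm G)\<^sup>2 / (2 * L)"
    using True by (simp add: field_simps power2_eq_square)
  ultimately have "(norm G)\<^sup>2 / (2 * L) \<le> bregman f Df z y" by simp
  then show ?thesis using True unfolding G_def by (simp add: field_simps)
next
  case False
  have b: "0 \<le> bregman f Df z y" by (rule bregman_nonneg[OF cv sm])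
  have n: "norm (Df z - Df y) \<le> L * norm (z - y)" using sm unfolding smooth_with_def by blast
  have "L * norm (z - y) \<le> 0" using False by (simp add: mult_nonpos_nonneg)
  then have "norm (Df z - Df y) = 0" using n norm_ge_zero[of "Df z - Df y"] by linarith
  moreover have "z \<noteq> y \<Longrightarrow> L = 0"
    using n False \<open>norm (Df z - Df y) = 0\<close> by (smt (verit) mult_neg_pos zero_less_norm_iff right_minus_eq)
  ultimately show ?thesis using b by (cases "z = y") (auto simp: bregman_def)
qed



lemma sq_split: "(norm (x - u))\<^sup>2 = (norm (x - m))\<^sup>2 + 2 * inner (x - m) (m - u) + (norm (m - u))\<^sup>2"
  for x u m :: "'a::real_inner"
proof -
  have g: "(norm (a + b))\<^sup>2 = (norm a)\<^sup>2 + 2 * inner a b + (norm b)\<^sup>2" for a b :: 'a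
    by (simp add: power2_norm_eq_inner inner_add_left inner_add_right inner_commute)
  have "x - u = (x - m) + (m - u)" by simp
  then show ?thesis using g[of "x - m" "m - u"] by metis
qed

lemma quad_identity:
  fixes g u y x :: "'a::euclidean_space"
  assumes K: "K > 0" and mu: "mu \<ge> 0"
  defines "m \<equiv> (1 / (2 * K + mu)) *\<^sub>R ((2 * K) *\<^sub>R u + mu *\<^sub>R y - g)"
  shows "inner g x + K * (norm (x - u))\<^sup>2 + mu / 2 * (norm (x - y))\<^sup>2
       = inner g m + K * (norm (m - u))\<^sup>2 + mu / 2 * (norm (m - y))\<^sup>2 + (K + mu / 2) * (norm (x - m))\<^sup>2"
proof -
  have pos: "2 * K + mu > 0" using K mu by simp
  have mm: "(2 * K + mu) *\<^sub>R m = (2 * K) *\<^sub>R u + mu *\<^sub>R y - g" unfolding m_def using pos by simp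
  have z: "g + (2 * K) *\<^sub>R (m - u) + mu *\<^sub>R (m - y) = 0"
  proof -
    have "g + (2 * K) *\<^sub>R (m - u) + mu *\<^sub>R (m - y) = g + (2 * K + mu) *\<^sub>R m - (2 * K) *\<^sub>R u - mu *\<^sub>R y"
      by (simp add: algebra_simps)
    then show ?thesis unfolding mm by simp
  qed
  have "inner (x - m) (g + (2 * K) *\<^sub>R (m - u) + mu *\<^sub>R (m - y)) = 0" unfolding z by simp
  then have z2: "inner g (x - m) + 2 * K * inner (x - m) (m - u) + mu * inner (x - m) (m - y) = 0"
    by (simp add: inner_add_right inner_commute)
  have a1: "K * (norm (x - u))\<^sup>2 = K * (norm (x - m))\<^sup>2 + 2 * K * inner (x - m) (m - u) + K * (norm (m - u))\<^sup>2"
    unfolding sq_split[of x u m] by (simp add: distrib_left)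
  have a2: "mu / 2 * (norm (x - y))\<^sup>2 = mu / 2 * (norm (x - m))\<^sup>2 + mu * inner (x - m) (m - y) + mu / 2 * (norm (m - y))\<^sup>2"
    unfolding sq_split[of x y m] by (simp add: distrib_left)
  have a3: "inner g x = inner g m + inner g (x - m)" by (simp add: inner_diff_right)
  have a4: "(K + mu / 2) * (norm (x - m))\<^sup>2 = K * (norm (x - m))\<^sup>2 + mu / 2 * (norm (x - m))\<^sup>2"
    by (simp add: distrib_right)
  show ?thesis
    using z2 a1 a2 a3 a4 by linarith
qed

lemma argmin_quad:
  fixes g u y :: "'a::euclidean_space"
  assumes K: "K > 0" and mu: "mu \<ge> 0"
  shows "arg_min (\<lambda>x. inner g x + K * (norm (x - u))\<^sup>2 + mu / 2 * (norm (x - y))\<^sup>2) (\<lambda>_. True)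
       = (1 / (2 * K + mu)) *\<^sub>R ((2 * K) *\<^sub>R u + mu *\<^sub>R y - g)"
proof -
  define m where "m = (1 / (2 * K + mu)) *\<^sub>R ((2 * K) *\<^sub>R u + mu *\<^sub>R y - g)"
  define phi where "phi = (\<lambda>x. inner g x + K * (norm (x - u))\<^sup>2 + mu / 2 * (norm (x - y))\<^sup>2)"
  have id: "phi x = phi m + (K + mu / 2) * (norm (x - m))\<^sup>2" for x
    unfolding phi_def m_def using quad_identity[OF K mu, of g x u y] by simp
  have KK: "K + mu / 2 > 0" using K mu by simp
  have "is_arg_min phi (\<lambda>_. True) m"
  proof -
    have "phi m \<le> phi x" for x
    proof -
      have "0 \<le> (K + mu / 2) * (norm (x - m))\<^sup>2" using KK by simp
      then show ?thesis using id[of x] by linarith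
    qed
    then show ?thesis unfolding is_arg_min_def by (simp add: not_less)
  qed
  moreover have "x = m" if "is_arg_min phi (\<lambda>_. True) x" for x
  proof (rule ccontr)
    assume "x \<noteq> m"
    then have "phi m < phi x" using id[of x] KK by simp
    then show False using that unfolding is_arg_min_def by auto
  qed
  ultimately have "arg_min phi (\<lambda>_. True) = m"
    unfolding arg_min_def by (rule some_equality)
  then show ?thesis unfolding phi_def m_def .
qed



lemma quad_int:
  fixes E :: "'w \<Rightarrow> 'a::euclidean_space"
  assumes P: "prob_space M" and iE: "integrable M E" and iN: "integrable M (\<lambda>s. (norm (E s))\<^sup>2)"
    and m0: "(\<integral>s. E s \<partial>M) = 0"
  shows "integrable M (\<lambda>s. (norm (c0 + k *\<^sub>R E s))\<^sup>2)"
    and "(\<integral>s. (norm (c0 + k *\<^sub>R E s))\<^sup>2 \<partial>M) = (norm c0)\<^sup>2 + k\<^sup>2 * (\<integral>s. (norm (E s))\<^sup>2 \<partial>M)"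
proof -
  interpret prob_space M by (rule P)
  have eq: "(norm (c0 + k *\<^sub>R E s))\<^sup>2 = (norm c0)\<^sup>2 + 2 * k * inner c0 (E s) + k\<^sup>2 * (norm (E s))\<^sup>2" for s
  proof -
    have g: "(norm (a + b))\<^sup>2 = (norm a)\<^sup>2 + 2 * inner a b + (norm b)\<^sup>2" for a b :: 'a
      by (simp add: power2_norm_eq_inner inner_add_left inner_add_right inner_commute)
    have "(norm (k *\<^sub>R E s))\<^sup>2 = k\<^sup>2 * (norm (E s))\<^sup>2" by (simp add: power_mult_distrib)
    moreover have "inner c0 (k *\<^sub>R E s) = k * inner c0 (E s)" by simp
    ultimately show ?thesis using g[of c0 "k *\<^sub>R E s"] by simp
  qed
  have i1: "integrable M (\<lambda>s. inner c0 (E s))" using iE by simp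
  have i2: "integrable M (\<lambda>s. (norm c0)\<^sup>2 + 2 * k * inner c0 (E s) + k\<^sup>2 * (norm (E s))\<^sup>2)"
    using i1 iN by (intro Bochner_Integration.integrable_add) auto
  then show "integrable M (\<lambda>s. (norm (c0 + k *\<^sub>R E s))\<^sup>2)" unfolding eq .
  have "(\<integral>s. (norm (c0 + k *\<^sub>R E s))\<^sup>2 \<partial>M) = (\<integral>s. (norm c0)\<^sup>2 + 2 * k * inner c0 (E s) + k\<^sup>2 * (norm (E s))\<^sup>2 \<partial>M)"
    unfolding eq ..
  also have "\<dots> = (norm c0)\<^sup>2 + 2 * k * (\<integral>s. inner c0 (E s) \<partial>M) + k\<^sup>2 * (\<integral>s. (norm (E s))\<^sup>2 \<partial>M)"
    using i1 iN by (simp add: Bochner_Integration.integral_add prob_space)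
  also have "(\<integral>s. inner c0 (E s) \<partial>M) = 0" using iE m0 by simp
  finally show "(\<integral>s. (norm (c0 + k *\<^sub>R E s))\<^sup>2 \<partial>M) = (norm c0)\<^sup>2 + k\<^sup>2 * (\<integral>s. (norm (E s))\<^sup>2 \<partial>M)"
    by simp
qed

lemma inner_int:
  fixes X Y :: "'w \<Rightarrow> 'a::euclidean_space"
  assumes iX: "integrable M (\<lambda>s. (norm (X s))\<^sup>2)" and iY: "integrable M (\<lambda>s. (norm (Y s))\<^sup>2)"
    and mX: "X \<in> borel_measurable M" and mY: "Y \<in> borel_measurable M"
  shows "integrable M (\<lambda>s. inner (X s) (Y s))"
proof (rule Bochner_Integration.integrable_bound[where f = "\<lambda>s. (norm (X s))\<^sup>2 + (norm (Y s))\<^sup>2"])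
  show "integrable M (\<lambda>s. (norm (X s))\<^sup>2 + (norm (Y s))\<^sup>2)" using iX iY by auto
  show "(\<lambda>s. inner (X s) (Y s)) \<in> borel_measurable M" using mX mY by measurable
  show "AE s in M. norm (inner (X s) (Y s)) \<le> norm ((norm (X s))\<^sup>2 + (norm (Y s))\<^sup>2)"
  proof (rule AE_I2)
    fix s
    have "\<bar>inner (X s) (Y s)\<bar> \<le> norm (X s) * norm (Y s)" by (rule Cauchy_Schwarz_ineq2)
    also have "\<dots> \<le> (norm (X s))\<^sup>2 + (norm (Y s))\<^sup>2"
    proof -
      have "0 \<le> (norm (X s) - norm (Y s))\<^sup>2" by simp
      moreover have "0 \<le> norm (X s) * norm (Y s)" by simp
      ultimately show ?thesis unfolding power2_diff by linarith
    qed
    finally show "norm (inner (X s) (Y s)) \<le> norm ((norm (X s))\<^sup>2 + (norm (Y s))\<^sup>2)" by simp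
  qed
qed



lemma var_sum:
  fixes e :: "nat \<Rightarrow> 'w \<Rightarrow> 'a::euclidean_space"
  assumes fin: "finite I"
    and me: "\<And>i. i \<in> I \<Longrightarrow> e i \<in> borel_measurable M"
    and iN: "\<And>i. i \<in> I \<Longrightarrow> integrable M (\<lambda>s. (norm (e i s))\<^sup>2)"
    and orth: "\<And>i j. i \<in> I \<Longrightarrow> j \<in> I \<Longrightarrow> i \<noteq> j \<Longrightarrow> (\<integral>s. inner (e i s) (e j s) \<partial>M) = 0"
  shows "integrable M (\<lambda>s. (norm (\<Sum>i\<in>I. e i s))\<^sup>2)"
    and "(\<integral>s. (norm (\<Sum>i\<in>I. e i s))\<^sup>2 \<partial>M) = (\<Sum>i\<in>I. \<integral>s. (norm (e i s))\<^sup>2 \<partial>M)"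
proof -
  have eq: "(norm (\<Sum>i\<in>I. e i s))\<^sup>2 = (\<Sum>i\<in>I. \<Sum>j\<in>I. inner (e i s) (e j s))" for s
    by (simp add: power2_norm_eq_inner inner_sum_left inner_sum_right, subst sum.swap, rule refl)
  have ii: "integrable M (\<lambda>s. inner (e i s) (e j s))" if "i \<in> I" "j \<in> I" for i j
    using inner_int[OF iN[OF that(1)] iN[OF that(2)] me[OF that(1)] me[OF that(2)]] .
  show "integrable M (\<lambda>s. (norm (\<Sum>i\<in>I. e i s))\<^sup>2)"
    unfolding eq using ii by (intro Bochner_Integration.integrable_sum) auto
  have "(\<integral>s. (norm (\<Sum>i\<in>I. e i s))\<^sup>2 \<partial>M) = (\<Sum>i\<in>I. \<Sum>j\<in>I. \<integral>s. inner (e i s) (e j s) \<partial>M)"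
    unfolding eq using ii
    by (simp add: Bochner_Integration.integral_sum Bochner_Integration.integrable_sum)
  also have "\<dots> = (\<Sum>i\<in>I. \<Sum>j\<in>I. if j = i then \<integral>s. (norm (e i s))\<^sup>2 \<partial>M else 0)"
    using orth by (intro sum.cong refl) (auto simp: power2_norm_eq_inner)
  also have "\<dots> = (\<Sum>i\<in>I. \<integral>s. (norm (e i s))\<^sup>2 \<partial>M)"
    using fin by (simp add: sum.delta)
  finally show "(\<integral>s. (norm (\<Sum>i\<in>I. e i s))\<^sup>2 \<partial>M) = (\<Sum>i\<in>I. \<integral>s. (norm (e i s))\<^sup>2 \<partial>M)" .
qed



lemma indep_inner_zero:
  fixes X Y :: "'w \<Rightarrow> 'a::euclidean_space"
  assumes P: "prob_space M" and ind: "prob_space.indep_var M borel X borel Y"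
    and iX: "integrable M X" and iY: "integrable M Y" and m0: "(\<integral>s. X s \<partial>M) = 0"
  shows "(\<integral>s. inner (X s) (Y s) \<partial>M) = 0"
proof -
  interpret prob_space M by (rule P)
  have "(\<integral>s. inner (X s) b * inner (Y s) b \<partial>M) = 0" if "b \<in> Basis" for b
  proof -
    have "indep_var borel ((\<lambda>v. inner v b) \<circ> X) borel ((\<lambda>v. inner v b) \<circ> Y)"
      by (rule indep_var_compose[OF ind]) auto
    then have "(\<integral>s. inner (X s) b * inner (Y s) b \<partial>M) = (\<integral>s. inner (X s) b \<partial>M) * (\<integral>s. inner (Y s) b \<partial>M)"
      using iX iY by (intro indep_var_lebesgue_integral) (auto simp: o_def)
    also have "(\<integral>s. inner (X s) b \<partial>M) = 0" using iX m0 by simp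
    finally show ?thesis by simp
  qed
  moreover have "integrable M (\<lambda>s. inner (X s) b * inner (Y s) b)" if "b \<in> Basis" for b
  proof -
    have "indep_var borel ((\<lambda>v. inner v b) \<circ> X) borel ((\<lambda>v. inner v b) \<circ> Y)"
      by (rule indep_var_compose[OF ind]) auto
    then show ?thesis using iX iY by (intro indep_var_integrable) (auto simp: o_def)
  qed
  ultimately have "(\<integral>s. (\<Sum>b\<in>Basis. inner (X s) b * inner (Y s) b) \<partial>M) = 0"
    by (simp add: Bochner_Integration.integral_sum)
  moreover have "(\<integral>s. inner (X s) (Y s) \<partial>M) = (\<integral>s. (\<Sum>b\<in>Basis. inner (X s) b * inner (Y s) b) \<partial>M)"
    by (rule Bochner_Integration.integral_cong[OF refl]) (rule euclidean_inner)
  ultimately show ?thesis by simp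
qed



lemma indep_set_var:
  assumes P: "prob_space M" and mX: "X \<in> measurable M S" and mY: "Y \<in> measurable M T"
    and ind: "prob_space.indep_set M {X -` A \<inter> space M | A. A \<in> sets S} {Y -` B \<inter> space M | B. B \<in> sets T}"
  shows "prob_space.indep_var M S X T Y"
proof -
  interpret prob_space M by (rule P)
  have e: "(\<lambda>i. {case_bool X Y i -` A \<inter> space M | A. A \<in> sets (case_bool S T i)})
      = case_bool {X -` A \<inter> space M | A. A \<in> sets S} {Y -` B \<inter> space M | B. B \<in> sets T}"
    by (rule ext) (simp split: bool.split)
  show ?thesis
    unfolding indep_var_def indep_vars_def2 e using ind mX mY
    by (auto simp: indep_set_def split: bool.split)
qed



lemma indep_pair:
  assumes P: "prob_space M" and ind: "prob_space.indep_vars M (\<lambda>_. borel) X I"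
    and ij: "i \<in> I" "j \<in> I" "i \<noteq> j"
  shows "prob_space.indep_var M borel (X i) borel (X j)"
proof -
  interpret prob_space M by (rule P)
  have "indep_var (PiM {i} (\<lambda>_. borel)) (\<lambda>\<omega>. restrict (\<lambda>k. X k \<omega>) {i}) (PiM {j} (\<lambda>_. borel)) (\<lambda>\<omega>. restrict (\<lambda>k. X k \<omega>) {j})"
    using ij by (intro indep_var_restrict[OF ind]) auto
  then have "indep_var borel ((\<lambda>v. v i) \<circ> (\<lambda>\<omega>. restrict (\<lambda>k. X k \<omega>) {i})) borel ((\<lambda>v. v j) \<circ> (\<lambda>\<omega>. restrict (\<lambda>k. X k \<omega>) {j}))"
    by (rule indep_var_compose) (auto intro: measurable_component_singleton)
  then show ?thesis by (simp add: o_def)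
qed




lemma indep_set_var2:
  assumes P: "prob_space M" and mX: "X \<in> measurable M S" and mY: "Y \<in> measurable M T"
    and mF: "F \<in> measurable S R" and mG: "G \<in> measurable T R"
    and ind: "prob_space.indep_set M {X -` A \<inter> space M | A. A \<in> sets S} {Y -` B \<inter> space M | B. B \<in> sets T}"
  shows "prob_space.indep_var M R (F \<circ> X) R (G \<circ> Y)"
proof (rule indep_set_var[OF P])
  show "F \<circ> X \<in> measurable M R" using mX mF by (rule measurable_comp)
  show "G \<circ> Y \<in> measurable M R" using mY mG by (rule measurable_comp)
  have s1: "{(F \<circ> X) -` A \<inter> space M | A. A \<in> sets R} \<subseteq> {X -` A \<inter> space M | A. A \<in> sets S}"
  proof safe
    fix A assume "A \<in> sets R"
    then have "F -` A \<inter> space S \<in> sets S" using mF by (rule measurable_sets[rotated])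
    moreover have sp: "\<And>s. s \<in> space M \<Longrightarrow> X s \<in> space S" by (rule measurable_space[OF mX])
    moreover have "(F \<circ> X) -` A \<inter> space M = X -` (F -` A \<inter> space S) \<inter> space M"
      using sp by auto
    ultimately show "\<exists>A'. (F \<circ> X) -` A \<inter> space M = X -` A' \<inter> space M \<and> A' \<in> sets S" by blast
  qed
  have s2: "{(G \<circ> Y) -` A \<inter> space M | A. A \<in> sets R} \<subseteq> {Y -` A \<inter> space M | A. A \<in> sets T}"
  proof safe
    fix A assume "A \<in> sets R"
    then have "G -` A \<inter> space T \<in> sets T" using mG by (rule measurable_sets[rotated])
    moreover have sp: "\<And>s. s \<in> space M \<Longrightarrow> Y s \<in> space T" by (rule measurable_space[OF mY])
    moreover have "(G \<circ> Y) -` A \<inter> space M = Y -` (G -` A \<inter> space T) \<inter> space M"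
      using sp by auto
    ultimately show "\<exists>A'. (G \<circ> Y) -` A \<inter> space M = Y -` A' \<inter> space M \<and> A' \<in> sets T" by blast
  qed
  show "prob_space.indep_set M {(F \<circ> X) -` A \<inter> space M | A. A \<in> sets R} {(G \<circ> Y) -` A \<inter> space M | A. A \<in> sets R}"
    unfolding prob_space.indep_set_def[OF P]
  proof (rule prob_space.indep_sets_mono_sets[OF P])
    show "prob_space.indep_sets M (case_bool {X -` A \<inter> space M | A. A \<in> sets S} {Y -` B \<inter> space M | B. B \<in> sets T}) UNIV"
      using ind unfolding prob_space.indep_set_def[OF P] .
    fix i :: bool
    show "case_bool {(F \<circ> X) -` A \<inter> space M | A. A \<in> sets R} {(G \<circ> Y) -` A \<inter> space M | A. A \<in> sets R} i
        \<subseteq> case_bool {X -` A \<inter> space M | A. A \<in> sets S} {Y -` B \<inter> space M | B. B \<in> sets T} i"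
      using s1 s2 by (cases i) simp_all
  qed
qed



lemma final_arith:
  fixes p th B K Lbar mu V W om Lmax nn fy fz G ix iy iz iu nxy nxu nuu nuy nxub Ef Ex D H L LHS Eu1 Eu2 :: real
  assumes p: "p > 0" and th: "th > 0" and Bp: "B > 0" and Lp: "Lbar > 0" and nn: "nn > 0"
    and thK: "th * Lbar \<le> 2 * K" and thB: "th * Lbar \<le> B" and V0: "V \<ge> 0"
    and Wd: "W = (1 / B)\<^sup>2 * V"
    and R: "fy + (ix - iy) + mu / 2 * nxy \<le> G"
    and Q: "ix + K * nxu + mu / 2 * nxy = iu + K * nuu + mu / 2 * nuy + B / 2 * nxub"
    and Dq: "D = fz - fy - (iz - iy)"
    and EfU: "Ef \<le> fy + (th * (iu - iy) + (1 - th) * (iz - iy)) + L / 2 * Ex"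
    and Vb: "V \<le> 4 * om * Lmax / nn * D + 2 * om / nn * H"
    and nuu: "nuu \<ge> 0" and nuy: "nuy \<ge> 0" and mu: "mu \<ge> 0"
    and LHS: "LHS = p * Ef + (1 - p) * fz - G"
    and Eu1: "Eu1 = nxub + W" and Eu2: "Eu2 = nuu + W"
  shows "LHS \<le> (1 - p * th) * (fz - G) + 2 * p * om / (nn * Lbar) * H
      + p * th * (K * nxu - B / 2 * Eu1)
      + p * (4 * om * Lmax / (nn * Lbar) + th - 1) * D
      + p * L / 2 * Ex - p * th\<^sup>2 * Lbar / 2 * Eu2"
proof -
  have Qx: "ix = iu + K * nuu + mu / 2 * nuy + B / 2 * nxub - K * nxu - mu / 2 * nxy" using Q by linarith
  define c1 where "c1 = 4 * om * Lmax / (nn * Lbar)"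
  define c2 where "c2 = 2 * om / (nn * Lbar)"
  define RHS1 where "RHS1 = (1 - th) * (fz - G) + c2 * H + th * (K * nxu - B / 2 * Eu1) + (c1 + th - 1) * D + L / 2 * Ex - th\<^sup>2 * Lbar / 2 * Eu2"
  define U where "U = fy + (th * (iu - iy) + (1 - th) * (iz - iy)) + L / 2 * Ex"
  define VT where "VT = th * B / 2 * W + th\<^sup>2 * Lbar / 2 * W"
  have e: "RHS1 - (U - G) = th * (G - (fy + (ix - iy) + mu / 2 * nxy)) + th * (K - th * Lbar / 2) * nuu
      + th * (mu / 2) * nuy + (c1 * D + c2 * H - VT)"
    unfolding RHS1_def U_def VT_def Eu1 Eu2 Qx Dq by (simp add: algebra_simps power2_eq_square add_divide_distrib)
  have t1: "0 \<le> th * (G - (fy + (ix - iy) + mu / 2 * nxy))" using th R by simp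
  have t2: "0 \<le> th * (K - th * Lbar / 2) * nuu" using th thK nuu by simp
  have t3: "0 \<le> th * (mu / 2) * nuy" using th mu nuy by simp
  define t where "t = th * Lbar / B"
  have t0: "0 \<le> t" "t \<le> 1" unfolding t_def using th Lp Bp thB by auto
  have c_a: "th * B / 2 * (1 / B)\<^sup>2 * Lbar = t / 2" unfolding t_def using Bp by (simp add: field_simps power2_eq_square)
  have c_b: "th\<^sup>2 * Lbar / 2 * (1 / B)\<^sup>2 * Lbar = t\<^sup>2 / 2" unfolding t_def using Bp by (simp add: field_simps power2_eq_square)
  have tt: "t\<^sup>2 \<le> 1" using t0 by (simp add: power_le_one)
  have VT_eq: "VT * Lbar = (th * B / 2 * (1 / B)\<^sup>2 * Lbar + th\<^sup>2 * Lbar / 2 * (1 / B)\<^sup>2 * Lbar) * V"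
    unfolding VT_def Wd by (simp add: algebra_simps)
  have "VT * Lbar \<le> 1 * V" unfolding VT_eq c_a c_b using t0 tt V0 by (intro mult_right_mono) auto
  then have VT_le: "VT \<le> V / Lbar" using Lp by (simp add: pos_le_divide_eq)
  have "V / Lbar \<le> (4 * om * Lmax / nn * D + 2 * om / nn * H) / Lbar" using Vb Lp by (simp add: divide_right_mono)
  also have "\<dots> = c1 * D + c2 * H" unfolding c1_def c2_def using Lp nn by (simp add: field_simps)
  finally have t4: "0 \<le> c1 * D + c2 * H - VT" using VT_le by linarith
  have i1: "0 \<le> RHS1 - (Ef - G)"
  proof -
    have "RHS1 - (U - G) \<ge> 0" unfolding e using t1 t2 t3 t4 by linarith
    moreover have "Ef \<le> U" unfolding U_def by (rule EfU)
    ultimately show ?thesis by linarith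
  qed
  have fin: "(1 - p * th) * (fz - G) + 2 * p * om / (nn * Lbar) * H
      + p * th * (K * nxu - B / 2 * Eu1)
      + p * (4 * om * Lmax / (nn * Lbar) + th - 1) * D
      + p * L / 2 * Ex - p * th\<^sup>2 * Lbar / 2 * Eu2 - LHS = p * (RHS1 - (Ef - G))"
    unfolding LHS RHS1_def c1_def c2_def by (simp add: algebra_simps)
  have "0 \<le> p * (RHS1 - (Ef - G))" using p i1 by simp
  then show ?thesis using fin by linarith
qed



theorem lemma6:
  fixes n :: nat
    and fi :: "nat \<Rightarrow> 'a::euclidean_space \<Rightarrow> real" and Dfi :: "nat \<Rightarrow> 'a \<Rightarrow> 'a"
    and Li :: "nat \<Rightarrow> real" and Lhat L Lbar mu p Gam alpha tau omega :: real
    and xs :: 'a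
    and M :: "'w measure" and Cy :: "nat \<Rightarrow> 'w \<Rightarrow> 'a \<Rightarrow> 'a" and c :: "'w \<Rightarrow> bool"
    and u z w :: 'a and h :: "nat \<Rightarrow> 'a"
    and f :: "'a \<Rightarrow> real" and Df :: "'a \<Rightarrow> 'a"
    and Lmax theta_min theta_bar theta gamma Gam' :: real
    and y :: 'a and g u' x' z' :: "'w \<Rightarrow> 'a"
  assumes n_pos: "n > 0"
    and def_f: "f = (\<lambda>x. (1 / real n) * (\<Sum>i<n. fi i x))"
    and def_Df: "Df = (\<lambda>x. (1 / real n) *\<^sub>R (\<Sum>i<n. Dfi i x))"
    and def_Lmax: "Lmax = Max (Li ` {..<n})"
    and def_theta_min: "theta_min = 1 / 4 * min (min 1 (alpha / p)) (min (tau / p) ((1 / (omega + 1)) / p))"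
    and def_theta_bar: "theta_bar = largest_root (p * Lbar * Gam) (p * (Lbar + Gam * mu)) (Lbar + Gam * mu)"
    and def_theta: "theta = min theta_bar theta_min"
    and def_gamma: "gamma = p * theta * Gam / (1 - p * theta)"
    and def_Gam'_: "Gam' = Gam + gamma"
    and def_y: "y = theta *\<^sub>R w + (1 - theta) *\<^sub>R z"
    and def_g: "g = (\<lambda>s. (1 / real n) *\<^sub>R (\<Sum>i<n. h i) + (1 / real n) *\<^sub>R (\<Sum>i<n. Cy i s (Dfi i y - h i)))"
    and def_u'_: "u' = (\<lambda>s. arg_min (\<lambda>x. inner (g s) x + (Lbar + Gam * mu) / (2 * gamma) * (norm (x - u))\<^sup>2
                                   + mu / 2 * (norm (x - y))\<^sup>2) (\<lambda>_. True))"
    and def_x'_: "x' = (\<lambda>s. theta *\<^sub>R u' s + (1 - theta) *\<^sub>R z)"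
    and def_z'_: "z' = (\<lambda>s. if c s then x' s else z)"
    \<comment> \<open>Assumption 1\<close>
    and smooth_i: "\<forall>i<n. smooth_with (Li i) (fi i) (Dfi i)"
    and Lhat_pos: "Lhat > 0"
    and Lhat: "\<forall>x y. (1 / real n) * (\<Sum>i<n. (norm (Dfi i x - Dfi i y))\<^sup>2) \<le> Lhat\<^sup>2 * (norm (x - y))\<^sup>2"
    \<comment> \<open>Assumption 2\<close>
    and smooth_f: "smooth_with L f Df"
    \<comment> \<open>Assumption 3\<close>
    and convex_i: "\<forall>i<n. convex_on UNIV (fi i)"
    and mu_nonneg: "mu \<ge> 0"
    and strong: "strongly_convex mu f"
    and xs_min: "\<forall>x. f xs \<le> f x"
    \<comment> \<open>parameters of the algorithm\<close>
    and Lbar_pos: "Lbar > 0"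
    and p_range: "0 < p" "p \<le> 1"
    and Gam_ge: "Gam \<ge> 1"
    and tau_range: "0 < tau" "tau \<le> 1"
    and alpha_range: "0 < alpha" "alpha \<le> 1"
    \<comment> \<open>randomness of step t: worker compressors and coin\<close>
    and M_prob: "prob_space M"
    and Cy_U: "\<forall>i<n. unbiased_compressor M omega (Cy i)"
    and c_meas: "c \<in> measurable M (count_space UNIV)"
    and c_prob: "prob_space.prob M {s \<in> space M. c s} = p"
    \<comment> \<open>Assumption 4: independence\<close>
    and indep: "\<forall>xv :: nat \<Rightarrow> 'a.
        prob_space.indep_vars M (\<lambda>_. borel) (\<lambda>i s. Cy i s (xv i)) {..<n} \<and>
        prob_space.indep_set M
          {(\<lambda>s. \<lambda>i\<in>{..<n}. Cy i s (xv i)) -` A \<inter> space M | A. A \<in> sets (PiM {..<n} (\<lambda>_. borel))}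
          {c -` B \<inter> space M | B. B \<in> sets (count_space (UNIV :: bool set))}"
  shows "(\<integral>s. f (z' s) - f xs \<partial>M)
    \<le> (1 - p * theta) * (f z - f xs)
      + 2 * p * omega / (real n * Lbar) * ((1 / real n) * (\<Sum>i<n. (norm (h i - Dfi i z))\<^sup>2))
      + p * theta * ((Lbar + Gam * mu) / (2 * gamma) * (norm (u - xs))\<^sup>2
                     - (Lbar + Gam' * mu) / (2 * gamma) * (\<integral>s. (norm (u' s - xs))\<^sup>2 \<partial>M))
      + p * (4 * omega * Lmax / (real n * Lbar) + theta - 1) * bregman f Df z y
      + p * L / 2 * (\<integral>s. (norm (x' s - y))\<^sup>2 \<partial>M)
      - p * theta\<^sup>2 * Lbar / 2 * (\<integral>s. (norm (u' s - u))\<^sup>2 \<partial>M)"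
proof -
  interpret P: prob_space M by (rule M_prob)
  have np: "real n > 0" using n_pos by simp
  have om: "omega \<ge> 0" using Cy_U n_pos unfolding unbiased_compressor_def by blast
  define A where "A = Lbar + Gam * mu"
  have A_pos: "A > 0" unfolding A_def using Lbar_pos Gam_ge mu_nonneg by (simp add: add_pos_nonneg)
  have tmin_pos: "theta_min > 0" unfolding def_theta_min
    using alpha_range tau_range p_range om by (simp add: add_nonneg_pos)
  have tmin_le: "theta_min \<le> 1 / 4" unfolding def_theta_min by simp
  define qa where "qa = p * Lbar * Gam"
  have qa_pos: "qa > 0" unfolding qa_def using p_range Lbar_pos Gam_ge by simp
  have pA_pos: "p * A > 0" using p_range A_pos by simp
  have disc: "sqrt ((p * A)\<^sup>2 + 4 * qa * A) > p * A"
  proof -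
    have "(p * A)\<^sup>2 < (p * A)\<^sup>2 + 4 * qa * A" using qa_pos A_pos by simp
    then have "sqrt ((p * A)\<^sup>2) < sqrt ((p * A)\<^sup>2 + 4 * qa * A)" by (rule real_sqrt_less_mono)
    then show ?thesis using pA_pos by simp
  qed
  have tb_eq: "theta_bar = (- (p * A) + sqrt ((p * A)\<^sup>2 + 4 * qa * A)) / (2 * qa)"
    unfolding def_theta_bar largest_root_def A_def qa_def by simp
  have tbar_pos: "theta_bar > 0" unfolding tb_eq using disc qa_pos by simp
  have tbar_root: "qa * theta_bar\<^sup>2 + p * A * theta_bar = A"
  proof -
    define S where "S = sqrt ((p * A)\<^sup>2 + 4 * qa * A)"
    have S2: "S\<^sup>2 = (p * A)\<^sup>2 + 4 * qa * A" unfolding S_def using qa_pos A_pos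
      by (simp add: add_nonneg_nonneg)
    have "2 * qa * theta_bar = S - p * A" unfolding tb_eq S_def using qa_pos by simp
    then have "(2 * qa * theta_bar + p * A)\<^sup>2 = S\<^sup>2" by simp
    then have "4 * qa * (qa * theta_bar\<^sup>2 + p * A * theta_bar) = 4 * qa * A"
      unfolding S2 by (simp add: power2_eq_square algebra_simps)
    then show ?thesis using qa_pos by simp
  qed
  have th_pos: "theta > 0" unfolding def_theta using tbar_pos tmin_pos by simp
  have th_le: "theta \<le> 1 / 4" unfolding def_theta using tmin_le by simp
  have th_le_bar: "theta \<le> theta_bar" unfolding def_theta by simp
  have pth: "p * theta < 1"
  proof -
    have "p * theta \<le> 1 * (1 / 4)" using p_range th_pos th_le by (intro mult_mono) auto
    then show ?thesis by simp
  qed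
  have gam_pos: "gamma > 0" unfolding def_gamma using p_range th_pos Gam_ge pth by simp
  have q_mono: "qa * theta\<^sup>2 + p * A * theta \<le> A"
  proof -
    have "theta\<^sup>2 \<le> theta_bar\<^sup>2" using th_pos th_le_bar by (simp add: power_mono)
    then have "qa * theta\<^sup>2 \<le> qa * theta_bar\<^sup>2" using qa_pos by simp
    moreover have "p * A * theta \<le> p * A * theta_bar" using pA_pos th_le_bar by (intro mult_left_mono) auto
    ultimately show ?thesis using tbar_root by linarith
  qed
  have key: "theta * gamma * Lbar \<le> A"
  proof -
    have "theta * gamma * Lbar = qa * theta\<^sup>2 / (1 - p * theta)"
      unfolding def_gamma qa_def using pth by (simp add: power2_eq_square field_simps)
    also have "\<dots> \<le> A" using q_mono pth by (simp add: pos_divide_le_eq algebra_simps)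
    finally show ?thesis .
  qed
  define K where "K = A / (2 * gamma)"
  have K_pos: "K > 0" unfolding K_def using A_pos gam_pos by simp
  define B where "B = 2 * K + mu"
  have B_pos: "B > 0" unfolding B_def using K_pos mu_nonneg by simp
  have thL: "theta * Lbar \<le> 2 * K"
    unfolding K_def using key gam_pos by (simp add: field_simps)
  have thLB: "theta * Lbar \<le> B" using thL mu_nonneg unfolding B_def by simp
  have K_eq: "(Lbar + Gam * mu) / (2 * gamma) = K" unfolding K_def A_def ..
  have B_eq: "(Lbar + Gam' * mu) / (2 * gamma) = B / 2"
    unfolding B_def K_def A_def def_Gam'_ using gam_pos by (simp add: field_simps)
  define a where "a = (\<lambda>i. Dfi i y - h i)"
  define e where "e = (\<lambda>i s. Cy i s (a i) - a i)"
  define E where "E = (\<lambda>s. (1 / real n) *\<^sub>R (\<Sum>i<n. e i s))"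
  define ub where "ub = (1 / B) *\<^sub>R ((2 * K) *\<^sub>R u + mu *\<^sub>R y - Df y)"
  define xb where "xb = theta *\<^sub>R ub + (1 - theta) *\<^sub>R z"
  have Cprops: "(\<lambda>s. Cy i s (a i)) \<in> borel_measurable M \<and> integrable M (\<lambda>s. Cy i s (a i)) \<and>
      (\<integral>s. Cy i s (a i) \<partial>M) = a i \<and> integrable M (\<lambda>s. (norm (Cy i s (a i) - a i))\<^sup>2) \<and>
      (\<integral>s. (norm (Cy i s (a i) - a i))\<^sup>2 \<partial>M) \<le> omega * (norm (a i))\<^sup>2" if "i < n" for i
    using Cy_U that unfolding unbiased_compressor_def by blast
  have e_meas: "e i \<in> borel_measurable M" if "i < n" for i
    unfolding e_def using Cprops[OF that] by (intro borel_measurable_diff) auto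
  have e_int: "integrable M (e i)" if "i < n" for i
    unfolding e_def using Cprops[OF that] by (intro Bochner_Integration.integrable_diff) auto
  have e_mean: "(\<integral>s. e i s \<partial>M) = 0" if "i < n" for i
    unfolding e_def using Cprops[OF that] by (simp add: Bochner_Integration.integral_diff P.prob_space)
  have e_sq: "integrable M (\<lambda>s. (norm (e i s))\<^sup>2)" "(\<integral>s. (norm (e i s))\<^sup>2 \<partial>M) \<le> omega * (norm (a i))\<^sup>2"
    if "i < n" for i
    unfolding e_def using Cprops[OF that] by auto
  have indv: "P.indep_vars (\<lambda>_. borel) (\<lambda>i s. Cy i s (a i)) {..<n}"
    using indep by blast
  have orth: "(\<integral>s. inner (e i s) (e j s) \<partial>M) = 0" if "i < n" "j < n" "i \<noteq> j" for i j
  proof -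
    have "P.indep_var borel (\<lambda>s. Cy i s (a i)) borel (\<lambda>s. Cy j s (a j))"
      using indep_pair[OF M_prob indv, of i j] that by simp
    then have "P.indep_var borel ((\<lambda>v. v - a i) \<circ> (\<lambda>s. Cy i s (a i))) borel ((\<lambda>v. v - a j) \<circ> (\<lambda>s. Cy j s (a j)))"
      by (rule P.indep_var_compose) auto
    then have "P.indep_var borel (e i) borel (e j)" unfolding e_def by (simp add: o_def)
    then show ?thesis using indep_inner_zero[OF M_prob _ e_int e_int e_mean] that by blast
  qed
  have E_meas: "E \<in> borel_measurable M" unfolding E_def using e_meas
    by (intro borel_measurable_scaleR borel_measurable_const borel_measurable_sum) auto
  have E_int: "integrable M E" unfolding E_def using e_int
    by (intro Bochner_Integration.integrable_scaleR_right Bochner_Integration.integrable_sum) auto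
  have E_mean: "(\<integral>s. E s \<partial>M) = 0" unfolding E_def using e_int e_mean
    by (simp add: Bochner_Integration.integral_sum)
  have vs: "integrable M (\<lambda>s. (norm (\<Sum>i<n. e i s))\<^sup>2)"
    "(\<integral>s. (norm (\<Sum>i<n. e i s))\<^sup>2 \<partial>M) = (\<Sum>i<n. \<integral>s. (norm (e i s))\<^sup>2 \<partial>M)"
    using var_sum[of "{..<n}" e M] e_meas e_sq orth by auto
  have En: "(norm (E s))\<^sup>2 = (1 / real n)\<^sup>2 * (norm (\<Sum>i<n. e i s))\<^sup>2" for s
    unfolding E_def by (simp add: power_divide)
  have E_sq: "integrable M (\<lambda>s. (norm (E s))\<^sup>2)" unfolding En using vs by simp
  define V where "V = (\<integral>s. (norm (E s))\<^sup>2 \<partial>M)"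
  have V_eq: "V = (1 / real n)\<^sup>2 * (\<Sum>i<n. \<integral>s. (norm (e i s))\<^sup>2 \<partial>M)"
    unfolding V_def En using vs by simp
  have V_le: "V \<le> (1 / real n)\<^sup>2 * (\<Sum>i<n. omega * (norm (a i))\<^sup>2)"
    unfolding V_eq using e_sq by (intro mult_left_mono sum_mono) auto
  have g_eq: "g s = Df y + E s" for s
    unfolding def_g def_Df E_def e_def a_def
    by (simp add: sum_subtractf sum.distrib scaleR_diff_right scaleR_add_right algebra_simps)
  have u'_eq: "u' s = ub + (- (1 / B)) *\<^sub>R E s" for s
  proof -
    have "u' s = arg_min (\<lambda>x. inner (g s) x + K * (norm (x - u))\<^sup>2 + mu / 2 * (norm (x - y))\<^sup>2) (\<lambda>_. True)"
      unfolding def_u'_ K_eq ..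
    also have "\<dots> = (1 / (2 * K + mu)) *\<^sub>R ((2 * K) *\<^sub>R u + mu *\<^sub>R y - g s)"
      by (rule argmin_quad[OF K_pos mu_nonneg])
    also have "\<dots> = ub + (- (1 / B)) *\<^sub>R E s"
      unfolding ub_def B_def g_eq by (simp add: algebra_simps)
    finally show ?thesis .
  qed
  have x'_eq: "x' s = xb + (- (theta / B)) *\<^sub>R E s" for s
    unfolding def_x'_ u'_eq xb_def by (simp add: algebra_simps)
  have Eu1: "(\<integral>s. (norm (u' s - xs))\<^sup>2 \<partial>M) = (norm (ub - xs))\<^sup>2 + (1 / B)\<^sup>2 * V"
  proof -
    have "(\<lambda>s. (norm (u' s - xs))\<^sup>2) = (\<lambda>s. (norm ((ub - xs) + (- (1 / B)) *\<^sub>R E s))\<^sup>2)"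
      by (rule ext) (simp add: u'_eq algebra_simps)
    then show ?thesis using quad_int(2)[OF M_prob E_int E_sq E_mean, of "ub - xs" "- (1 / B)"]
      unfolding V_def by simp
  qed
  have Eu2: "(\<integral>s. (norm (u' s - u))\<^sup>2 \<partial>M) = (norm (ub - u))\<^sup>2 + (1 / B)\<^sup>2 * V"
  proof -
    have "(\<lambda>s. (norm (u' s - u))\<^sup>2) = (\<lambda>s. (norm ((ub - u) + (- (1 / B)) *\<^sub>R E s))\<^sup>2)"
      by (rule ext) (simp add: u'_eq algebra_simps)
    then show ?thesis using quad_int(2)[OF M_prob E_int E_sq E_mean, of "ub - u" "- (1 / B)"]
      unfolding V_def by simp
  qed
  have xy_eq: "(\<lambda>s. x' s - y) = (\<lambda>s. (xb - y) + (- (theta / B)) *\<^sub>R E s)"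
    by (rule ext) (simp add: x'_eq algebra_simps)
  have xy2: "(\<lambda>s. (norm (x' s - y))\<^sup>2) = (\<lambda>s. (norm ((xb - y) + (- (theta / B)) *\<^sub>R E s))\<^sup>2)"
    by (rule ext) (simp add: x'_eq algebra_simps)
  have Ex_int: "integrable M (\<lambda>s. (norm (x' s - y))\<^sup>2)"
    unfolding xy2 using quad_int(1)[OF M_prob E_int E_sq E_mean, of "xb - y" "- (theta / B)"] .
  have xy_int: "integrable M (\<lambda>s. x' s - y)"
    unfolding xy_eq using E_int by (intro Bochner_Integration.integrable_add) auto
  have xy_mean: "(\<integral>s. x' s - y \<partial>M) = xb - y"
    unfolding xy_eq using E_int E_mean by (simp add: Bochner_Integration.integral_add P.prob_space)
  have fcont: "continuous_on UNIV f"
  proof (rule continuous_at_imp_continuous_on, intro ballI)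
    fix x :: 'a
    have "(f has_derivative (\<lambda>h. inner h (Df x))) (at x)"
      using smooth_f unfolding smooth_with_def gderiv_def by blast
    then show "isCont f x" by (rule has_derivative_continuous)
  qed
  have fm: "f \<in> borel_measurable borel" using fcont by (rule borel_measurable_continuous_onI)
  have x'm: "x' \<in> borel_measurable M"
  proof -
    have "x' = (\<lambda>s. xb + (- (theta / B)) *\<^sub>R E s)" by (rule ext) (simp add: x'_eq)
    then show ?thesis using E_meas by simp
  qed
  define lo where "lo = (\<lambda>s. f y + inner (Df y) (x' s - y))"
  define hi where "hi = (\<lambda>s. lo s + L / 2 * (norm (x' s - y))\<^sup>2)"
  have lo_le: "lo s \<le> f (x' s)" for s
  proof -
    have "f y + inner (Df y) (x' s - y) + mu / 2 * (norm (x' s - y))\<^sup>2 \<le> f (x' s)"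
      by (rule strong_ineq[OF strong smooth_f])
    moreover have "0 \<le> mu / 2 * (norm (x' s - y))\<^sup>2" using mu_nonneg by simp
    ultimately show ?thesis unfolding lo_def by linarith
  qed
  have hi_ge: "f (x' s) \<le> hi s" for s
    unfolding hi_def lo_def using descent[OF smooth_f, of "x' s" y] by simp
  have lo_int: "integrable M lo" unfolding lo_def using xy_int by simp
  have lo_mean: "(\<integral>s. lo s \<partial>M) = f y + inner (Df y) (xb - y)"
    unfolding lo_def using xy_int xy_mean by (simp add: Bochner_Integration.integral_add P.prob_space)
  have hi_int: "integrable M hi" unfolding hi_def using lo_int Ex_int by simp
  have hi_mean: "(\<integral>s. hi s \<partial>M) = f y + inner (Df y) (xb - y) + L / 2 * (\<integral>s. (norm (x' s - y))\<^sup>2 \<partial>M)"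
    unfolding hi_def using lo_int Ex_int lo_mean by (simp add: Bochner_Integration.integral_add)
  have fx_int: "integrable M (\<lambda>s. f (x' s))"
  proof (rule Bochner_Integration.integrable_bound[where f = "\<lambda>s. \<bar>lo s\<bar> + \<bar>hi s\<bar>"])
    show "integrable M (\<lambda>s. \<bar>lo s\<bar> + \<bar>hi s\<bar>)" using lo_int hi_int by simp
    show "(\<lambda>s. f (x' s)) \<in> borel_measurable M" using measurable_compose[OF x'm fm] by (simp add: o_def)
    show "AE s in M. norm (f (x' s)) \<le> norm (\<bar>lo s\<bar> + \<bar>hi s\<bar>)"
      using lo_le hi_ge by (intro AE_I2) (smt (verit) real_norm_def)
  qed
  have Ef_le: "(\<integral>s. f (x' s) \<partial>M) \<le> f y + inner (Df y) (xb - y) + L / 2 * (\<integral>s. (norm (x' s - y))\<^sup>2 \<partial>M)"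
  proof -
    have "(\<integral>s. f (x' s) \<partial>M) \<le> (\<integral>s. hi s \<partial>M)"
      using fx_int hi_int hi_ge by (intro Bochner_Integration.integral_mono) auto
    then show ?thesis unfolding hi_mean .
  qed
  define X where "X = (\<lambda>s. \<lambda>i\<in>{..<n}. Cy i s (a i))"
  have Xm: "X \<in> measurable M (PiM {..<n} (\<lambda>_. borel))"
    unfolding X_def using Cprops by (intro measurable_restrict) auto
  have indXc: "prob_space.indep_set M {X -` A \<inter> space M | A. A \<in> sets (PiM {..<n} (\<lambda>_. borel))}
        {c -` B \<inter> space M | B. B \<in> sets (count_space UNIV)}"
      using indep unfolding X_def by blast
  define Phi where "Phi = (\<lambda>v::nat \<Rightarrow> 'a. f (xb + (- (theta / B)) *\<^sub>R ((1 / real n) *\<^sub>R (\<Sum>i<n. v i - a i))))"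
  have Phim: "Phi \<in> borel_measurable (PiM {..<n} (\<lambda>_. borel))"
  proof -
    have "(\<lambda>v::nat \<Rightarrow> 'a. xb + (- (theta / B)) *\<^sub>R ((1 / real n) *\<^sub>R (\<Sum>i<n. v i - a i)))
        \<in> borel_measurable (PiM {..<n} (\<lambda>_. borel))"
      by measurable
    from measurable_compose[OF this fm] show ?thesis unfolding Phi_def by (simp add: o_def)
  qed
  have PhiX: "Phi (X s) = f (x' s)" for s
  proof -
    have "(\<Sum>i<n. X s i - a i) = (\<Sum>i<n. e i s)" unfolding X_def e_def by (intro sum.cong) auto
    then show ?thesis unfolding Phi_def x'_eq E_def by simp
  qed
  define psi where "psi = (\<lambda>b::bool. if b then 1 else (0::real))"
  have psim: "psi \<in> borel_measurable (count_space UNIV)" by simp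
  have indfc: "prob_space.indep_var M borel (Phi \<circ> X) borel (psi \<circ> c)"
    by (rule indep_set_var2[OF M_prob Xm c_meas Phim psim indXc])
  have psic_m: "(\<lambda>s. psi (c s)) \<in> borel_measurable M"
    using measurable_compose[OF c_meas psim] by (simp add: o_def)
  have psic_int: "integrable M (\<lambda>s. psi (c s))"
    using psic_m by (intro P.integrable_const_bound[where B = 1]) (auto simp: psi_def)
  have psic_mean: "(\<integral>s. psi (c s) \<partial>M) = p"
  proof -
    have "(\<integral>s. psi (c s) \<partial>M) = (\<integral>s. indicator {s \<in> space M. c s} s \<partial>M)"
      by (rule Bochner_Integration.integral_cong) (auto simp: psi_def indicator_def)
    also have "\<dots> = measure M {s \<in> space M. c s}"
      by (simp add: Int_absorb2 subset_iff)
    also have "\<dots> = p" using c_prob by simp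
    finally show ?thesis .
  qed
  have fx_int': "integrable M (\<lambda>s. (Phi \<circ> X) s)" using fx_int by (simp add: o_def PhiX)
  have prod: "(\<integral>s. f (x' s) * psi (c s) \<partial>M) = (\<integral>s. f (x' s) \<partial>M) * p"
  proof -
    have "(\<integral>s. (Phi \<circ> X) s * (psi \<circ> c) s \<partial>M) = (\<integral>s. (Phi \<circ> X) s \<partial>M) * (\<integral>s. (psi \<circ> c) s \<partial>M)"
      using indfc fx_int' psic_int by (intro prob_space.indep_var_lebesgue_integral[OF M_prob]) (auto simp: o_def)
    then show ?thesis using psic_mean by (simp add: o_def PhiX)
  qed
  have prod_int: "integrable M (\<lambda>s. f (x' s) * psi (c s))"
  proof -
    have "integrable M (\<lambda>s. (Phi \<circ> X) s * (psi \<circ> c) s)"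
      using indfc fx_int' psic_int by (intro prob_space.indep_var_integrable[OF M_prob]) (auto simp: o_def)
    then show ?thesis by (simp add: o_def PhiX)
  qed
  have fz'_eq: "f (z' s) = f (x' s) * psi (c s) + f z * (1 - psi (c s))" for s
    unfolding def_z'_ psi_def by simp
  have Efz: "(\<integral>s. f (z' s) - f xs \<partial>M) = p * (\<integral>s. f (x' s) \<partial>M) + (1 - p) * f z - f xs"
  proof -
    have i2: "integrable M (\<lambda>s. f z * (1 - psi (c s)))" using psic_int by simp
    have "(\<integral>s. f (z' s) - f xs \<partial>M) = (\<integral>s. f (x' s) * psi (c s) + f z * (1 - psi (c s)) - f xs \<partial>M)"
      unfolding fz'_eq ..
    also have "\<dots> = (\<integral>s. f (x' s) * psi (c s) \<partial>M) + (\<integral>s. f z * (1 - psi (c s)) \<partial>M) - f xs"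
      using prod_int i2 by (simp add: Bochner_Integration.integral_diff Bochner_Integration.integral_add P.prob_space)
    also have "(\<integral>s. f z * (1 - psi (c s)) \<partial>M) = f z * (1 - p)"
      using psic_int psic_mean by (simp add: Bochner_Integration.integral_diff P.prob_space)
    finally show ?thesis unfolding prod by (simp add: algebra_simps)
  qed
  define Dz where "Dz = (\<lambda>i. bregman (fi i) (Dfi i) z y)"
  define H where "H = (1 / real n) * (\<Sum>i<n. (norm (h i - Dfi i z))\<^sup>2)"
  define D where "D = bregman f Df z y"
  have D_sum: "D = (1 / real n) * (\<Sum>i<n. Dz i)"
    unfolding D_def Dz_def bregman_def def_f def_Df
    by (simp add: inner_sum_left sum_subtractf right_diff_distrib)
  have Dz_nn: "0 \<le> Dz i" if "i < n" for i
    unfolding Dz_def using bregman_nonneg convex_i smooth_i that by blast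
  have Li_le: "Li i \<le> Lmax" if "i < n" for i
    unfolding def_Lmax using that by (intro Max_ge) auto
  have tri: "(norm (q1 + q2))\<^sup>2 \<le> 2 * (norm q1)\<^sup>2 + 2 * (norm q2)\<^sup>2" for q1 q2 :: 'a
  proof -
    have "norm (q1 + q2) \<le> norm q1 + norm q2" by (rule norm_triangle_ineq)
    then have "(norm (q1 + q2))\<^sup>2 \<le> (norm q1 + norm q2)\<^sup>2" by (intro power_mono) auto
    moreover have "0 \<le> (norm q1 - norm q2)\<^sup>2" by simp
    ultimately show ?thesis unfolding power2_sum power2_diff by linarith
  qed
  have a_bd: "(norm (a i))\<^sup>2 \<le> 4 * Lmax * Dz i + 2 * (norm (h i - Dfi i z))\<^sup>2" if "i < n" for i
  proof -
    have c: "(norm (Dfi i z - Dfi i y))\<^sup>2 \<le> 2 * Li i * Dz i"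
      unfolding Dz_def using cocoercive convex_i smooth_i that by blast
    have m: "Li i * Dz i \<le> Lmax * Dz i" by (rule mult_right_mono[OF Li_le[OF that] Dz_nn[OF that]])
    have "a i = (Dfi i y - Dfi i z) + (Dfi i z - h i)" unfolding a_def by simp
    then have "(norm (a i))\<^sup>2 \<le> 2 * (norm (Dfi i y - Dfi i z))\<^sup>2 + 2 * (norm (Dfi i z - h i))\<^sup>2"
      using tri by metis
    moreover have "norm (Dfi i y - Dfi i z) = norm (Dfi i z - Dfi i y)" by (rule norm_minus_commute)
    moreover have "norm (Dfi i z - h i) = norm (h i - Dfi i z)" by (rule norm_minus_commute)
    ultimately show ?thesis using c m by simp
  qed
  have V_bd: "V \<le> 4 * omega * Lmax / real n * D + 2 * omega / real n * H"
  proof -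
    have "(\<Sum>i<n. omega * (norm (a i))\<^sup>2) \<le> (\<Sum>i<n. omega * (4 * Lmax * Dz i + 2 * (norm (h i - Dfi i z))\<^sup>2))"
      using a_bd om by (intro sum_mono mult_left_mono) auto
    also have "\<dots> = omega * (4 * Lmax * (\<Sum>i<n. Dz i) + 2 * (\<Sum>i<n. (norm (h i - Dfi i z))\<^sup>2))"
      by (simp add: sum_distrib_left sum.distrib distrib_left mult.assoc)
    also have "(\<Sum>i<n. Dz i) = real n * D" unfolding D_sum using np by simp
    also have "(\<Sum>i<n. (norm (h i - Dfi i z))\<^sup>2) = real n * H" unfolding H_def using np by simp
    finally have "(1 / real n)\<^sup>2 * (\<Sum>i<n. omega * (norm (a i))\<^sup>2)
        \<le> (1 / real n)\<^sup>2 * (omega * (4 * Lmax * (real n * D) + 2 * (real n * H)))"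
      by (simp add: mult_left_mono)
    also have "\<dots> = 4 * omega * Lmax / real n * D + 2 * omega / real n * H"
      using np by (simp add: field_simps power2_eq_square)
    finally show ?thesis using V_le by linarith
  qed
  have V_nn: "0 \<le> V" unfolding V_def by (intro Bochner_Integration.integral_nonneg_AE) auto
  have R: "f y + (inner (Df y) xs - inner (Df y) y) + mu / 2 * (norm (xs - y))\<^sup>2 \<le> f xs"
    using strong_ineq[OF strong smooth_f, of y xs] by (simp add: inner_diff_right)
  have Q: "inner (Df y) xs + K * (norm (u - xs))\<^sup>2 + mu / 2 * (norm (xs - y))\<^sup>2
      = inner (Df y) ub + K * (norm (ub - u))\<^sup>2 + mu / 2 * (norm (ub - y))\<^sup>2 + B / 2 * (norm (ub - xs))\<^sup>2"
  proof -
    have "ub = (1 / (2 * K + mu)) *\<^sub>R ((2 * K) *\<^sub>R u + mu *\<^sub>R y - Df y)" unfolding ub_def B_def ..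
    then have q: "inner (Df y) xs + K * (norm (xs - u))\<^sup>2 + mu / 2 * (norm (xs - y))\<^sup>2
      = inner (Df y) ub + K * (norm (ub - u))\<^sup>2 + mu / 2 * (norm (ub - y))\<^sup>2 + (K + mu / 2) * (norm (xs - ub))\<^sup>2"
      using quad_identity[OF K_pos mu_nonneg, of "Df y" xs u y] by simp
    moreover have "norm (xs - u) = norm (u - xs)" by (rule norm_minus_commute)
    moreover have "norm (xs - ub) = norm (ub - xs)" by (rule norm_minus_commute)
    moreover have "K + mu / 2 = B / 2" unfolding B_def by simp
    ultimately show ?thesis by simp
  qed
  have Dq: "D = f z - f y - (inner (Df y) z - inner (Df y) y)"
    unfolding D_def bregman_def by (simp add: inner_diff_right)
  have EfU: "(\<integral>s. f (x' s) \<partial>M) \<le> f y + (theta * (inner (Df y) ub - inner (Df y) y) + (1 - theta) * (inner (Df y) z - inner (Df y) y))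
      + L / 2 * (\<integral>s. (norm (x' s - y))\<^sup>2 \<partial>M)"
  proof -
    have "inner (Df y) (xb - y) = theta * (inner (Df y) ub - inner (Df y) y) + (1 - theta) * (inner (Df y) z - inner (Df y) y)"
      unfolding xb_def by (simp add: inner_diff_right inner_add_right algebra_simps)
    then show ?thesis using Ef_le by simp
  qed
  have nuu: "0 \<le> (norm (ub - u))\<^sup>2" by simp
  have nuy: "0 \<le> (norm (ub - y))\<^sup>2" by simp
  show ?thesis
    unfolding K_eq B_eq
    by (rule final_arith[OF p_range(1) th_pos B_pos Lbar_pos np thL thLB V_nn refl R Q Dq[unfolded D_def] EfU V_bd[unfolded D_def H_def] nuu nuy mu_nonneg Efz Eu1 Eu2])
qed

end
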